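(* Let $n,m\ge1$, let $H$ be a group, let $\sigma_{n+m}\colon G_{n+m}\to S_{n+m}$ and $\sigma_n\colon G_n\to S_n$ be surjective homomorphisms with kernels $P_{\sigma_{n+m}}$ and $P_{\sigma_n}$, let $f\colon P_{\sigma_{n+m}}\to P_{\sigma_n}$ be a surjective homomorphism, and let $\psi_m\colon H^{n+m}\to H^n$ be the projection onto the first $n$ factors. For $k\in\{n,n+m\}$ let $PW_k$ be the preimage of $P_{\sigma_k}$ under the projection $H^k\rtimes_{\sigma_k}G_k\to G_k$, identified with the direct product $H^k\times P_{\sigma_k}$. Then the homomorphism $(\psi_m,f)\colon PW_{n+m}\to PW_n$, $(\mathbf h,g)\mapsto(\psi_m(\mathbf h),f(g))$, admits a section (a homomorphism $s$ with $(\psi_m,f)\circ s=\mathrm{id}$) if and only if $f$ admits a section.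
   Context: For a surjective homomorphism $\tau\colon G\to S_k$, $H^k\rtimes_\tau G$ is the semidirect product in which $G$ acts on $H^k$ by permuting coordinates through $\tau$: $g\cdot(h_1,\dots,h_k)=(h_{\tau(g)(1)},\dots,h_{\tau(g)(k)})$ (as a left action). Since $\ker\tau$ acts trivially, the preimage of $\ker\tau$ in $H^k\rtimes_\tau G$ is the internal direct product $H^k\times\ker\tau$. *)

theory Defs
  imports "HOL-Algebra.Algebra"
begin

definition kernel_grp :: "('a, 'm) monoid_scheme \<Rightarrow> nat \<Rightarrow> ('a \<Rightarrow> nat \<Rightarrow> nat) \<Rightarrow> ('a, 'm) monoid_scheme"
  where "kernel_grp G k \<sigma> = G\<lparr>carrier := kernel G (sym_group k) \<sigma>\<rparr>"

definition power_grp :: "('h, 'c) monoid_scheme \<Rightarrow> nat \<Rightarrow> (nat \<Rightarrow> 'h) monoid"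
  where "power_grp H k = product_group {1..k} (\<lambda>_. H)"

definition PW :: "('h, 'c) monoid_scheme \<Rightarrow> ('a, 'm) monoid_scheme \<Rightarrow> nat \<Rightarrow> ('a \<Rightarrow> nat \<Rightarrow> nat) \<Rightarrow> ((nat \<Rightarrow> 'h) \<times> 'a) monoid"
  where "PW H G k \<sigma> = power_grp H k \<times>\<times> kernel_grp G k \<sigma>"

definition proj_first :: "nat \<Rightarrow> (nat \<Rightarrow> 'h) \<Rightarrow> (nat \<Rightarrow> 'h)"
  where "proj_first n h = restrict h {1..n}"

end

theory Submission
  imports Defs
begin

theorem proposition5p21:
  fixes n m :: nat
    and H :: "('h, 'c) monoid_scheme"
    and G1 :: "('a, 'd) monoid_scheme" and G2 :: "('b, 'e) monoid_scheme"
    and \<sigma>1 :: "'a \<Rightarrow> nat \<Rightarrow> nat" and \<sigma>2 :: "'b \<Rightarrow> nat \<Rightarrow> nat"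
    and f :: "'a \<Rightarrow> 'b"
  assumes "n \<ge> 1" and "m \<ge> 1"
    and "group H" and "group G1" and "group G2"
    and "\<sigma>1 \<in> hom G1 (sym_group (n + m))" and "\<sigma>1 ` carrier G1 = carrier (sym_group (n + m))"
    and "\<sigma>2 \<in> hom G2 (sym_group n)" and "\<sigma>2 ` carrier G2 = carrier (sym_group n)"
    and "f \<in> hom (kernel_grp G1 (n + m) \<sigma>1) (kernel_grp G2 n \<sigma>2)"
    and "f ` carrier (kernel_grp G1 (n + m) \<sigma>1) = carrier (kernel_grp G2 n \<sigma>2)"
  shows "(\<exists>s \<in> hom (PW H G2 n \<sigma>2) (PW H G1 (n + m) \<sigma>1).
            \<forall>x \<in> carrier (PW H G2 n \<sigma>2).
              (\<lambda>(h, g). (proj_first n h, f g)) (s x) = x)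
         \<longleftrightarrow>
         (\<exists>t \<in> hom (kernel_grp G2 n \<sigma>2) (kernel_grp G1 (n + m) \<sigma>1).
            \<forall>y \<in> carrier (kernel_grp G2 n \<sigma>2). f (t y) = y)"
proof
  let ?P2 = "PW H G2 n \<sigma>2" and ?P1 = "PW H G1 (n + m) \<sigma>1"
  let ?K1 = "kernel_grp G1 (n + m) \<sigma>1" and ?K2 = "kernel_grp G2 n \<sigma>2"
  interpret H: group H by fact
  assume "\<exists>s \<in> hom ?P2 ?P1. \<forall>x \<in> carrier ?P2. (\<lambda>(h, g). (proj_first n h, f g)) (s x) = x"
  then obtain s where s: "s \<in> hom ?P2 ?P1"
    and sx: "\<And>x. x \<in> carrier ?P2 \<Longrightarrow> (\<lambda>(h, g). (proj_first n h, f g)) (s x) = x" by blast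
  define e where "e = (\<lambda>i\<in>{1..n}. \<one>\<^bsub>H\<^esub>)"
  have e: "e \<in> carrier (power_grp H n)" unfolding e_def power_grp_def by auto
  have ee: "e \<otimes>\<^bsub>power_grp H n\<^esub> e = e" unfolding e_def power_grp_def by auto
  define t where "t = (\<lambda>g. snd (s (e, g)))"
  have inP2: "(e, g) \<in> carrier ?P2" if "g \<in> carrier ?K2" for g
    using e that unfolding PW_def by simp
  have sc: "s (e, g) \<in> carrier ?P1" if "g \<in> carrier ?K2" for g
    using s inP2[OF that] by (auto simp: hom_def)
  show "\<exists>t \<in> hom ?K2 ?K1. \<forall>y \<in> carrier ?K2. f (t y) = y"
  proof (intro bexI ballI)
    fix y assume y: "y \<in> carrier ?K2"
    have "(\<lambda>(h, g). (proj_first n h, f g)) (s (e, y)) = (e, y)" using sx inP2[OF y] by blast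
    then show "f (t y) = y" unfolding t_def by (cases "s (e, y)") auto
  next
    show "t \<in> hom ?K2 ?K1"
    proof (rule homI)
      fix g assume "g \<in> carrier ?K2"
      then show "t g \<in> carrier ?K1" using sc unfolding t_def PW_def by (metis SigmaE carrier_DirProd snd_conv)
    next
      fix g g' assume g: "g \<in> carrier ?K2" and g': "g' \<in> carrier ?K2"
      have "s ((e, g) \<otimes>\<^bsub>?P2\<^esub> (e, g')) = s (e, g) \<otimes>\<^bsub>?P1\<^esub> s (e, g')"
        using s inP2[OF g] inP2[OF g'] by (auto simp: hom_def)
      moreover have "(e, g) \<otimes>\<^bsub>?P2\<^esub> (e, g') = (e, g \<otimes>\<^bsub>?K2\<^esub> g')"
        unfolding PW_def using ee by simp
      ultimately have "s (e, g \<otimes>\<^bsub>?K2\<^esub> g') = s (e, g) \<otimes>\<^bsub>?P1\<^esub> s (e, g')" by simp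
      then show "t (g \<otimes>\<^bsub>?K2\<^esub> g') = t g \<otimes>\<^bsub>?K1\<^esub> t g'"
        unfolding t_def PW_def by (cases "s (e, g)"; cases "s (e, g')") auto
    qed
  qed
next
  let ?P2 = "PW H G2 n \<sigma>2" and ?P1 = "PW H G1 (n + m) \<sigma>1"
  let ?K1 = "kernel_grp G1 (n + m) \<sigma>1" and ?K2 = "kernel_grp G2 n \<sigma>2"
  interpret H: group H by fact
  assume "\<exists>t \<in> hom ?K2 ?K1. \<forall>y \<in> carrier ?K2. f (t y) = y"
  then obtain t where t: "t \<in> hom ?K2 ?K1" and ft: "\<And>y. y \<in> carrier ?K2 \<Longrightarrow> f (t y) = y" by blast
  define ext where "ext = (\<lambda>h. \<lambda>i\<in>{1..n+m}. if i \<le> n then h i else \<one>\<^bsub>H\<^esub>)"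
  define s where "s = (\<lambda>(h, g). (ext h, t g))"
  show "\<exists>s \<in> hom ?P2 ?P1. \<forall>x \<in> carrier ?P2. (\<lambda>(h, g). (proj_first n h, f g)) (s x) = x"
  proof (intro bexI ballI)
    fix x assume x: "x \<in> carrier ?P2"
    then obtain h g where xe: "x = (h, g)" and h: "h \<in> carrier (power_grp H n)" and g: "g \<in> carrier ?K2"
      unfolding PW_def by auto
    have "proj_first n (ext h) = h"
      using h unfolding proj_first_def ext_def power_grp_def
      by (auto simp: fun_eq_iff PiE_def extensional_def)
    then show "(\<lambda>(h, g). (proj_first n h, f g)) (s x) = x"
      using ft[OF g] unfolding xe s_def by simp
  next
    show "s \<in> hom ?P2 ?P1"
    proof (rule homI)
      fix x assume x: "x \<in> carrier ?P2"
      then obtain h g where xe: "x = (h, g)" and h: "h \<in> carrier (power_grp H n)" and g: "g \<in> carrier ?K2"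
        unfolding PW_def by auto
      have "ext h \<in> carrier (power_grp H (n + m))"
        using h unfolding ext_def power_grp_def by (auto simp: PiE_def Pi_def)
      moreover have "t g \<in> carrier ?K1" using t g by (auto simp: hom_def)
      ultimately show "s x \<in> carrier ?P1" unfolding xe s_def PW_def by simp
    next
      fix x y assume x: "x \<in> carrier ?P2" and y: "y \<in> carrier ?P2"
      then obtain h g where xe: "x = (h, g)" and h: "h \<in> carrier (power_grp H n)" and g: "g \<in> carrier ?K2"
        unfolding PW_def by auto
      from y obtain h' g' where ye: "y = (h', g')" and h': "h' \<in> carrier (power_grp H n)" and g': "g' \<in> carrier ?K2"
        unfolding PW_def by auto
      have "t (g \<otimes>\<^bsub>?K2\<^esub> g') = t g \<otimes>\<^bsub>?K1\<^esub> t g'" using t g g' by (auto simp: hom_def)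
      moreover have "ext (h \<otimes>\<^bsub>power_grp H n\<^esub> h') = ext h \<otimes>\<^bsub>power_grp H (n + m)\<^esub> ext h'"
        unfolding ext_def power_grp_def by (auto simp: fun_eq_iff)
      ultimately show "s (x \<otimes>\<^bsub>?P2\<^esub> y) = s x \<otimes>\<^bsub>?P1\<^esub> s y"
        unfolding xe ye s_def PW_def by simp
    qed
  qed
qed

end
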